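(* Consider problem (P8) in variables $\boldsymbol\phi\in\mathbb C^N$, $\boldsymbol\psi\in\mathbb C^N$, $\alpha\in\mathbb R$: $$\min\ \alpha\quad\text{s.t.}\quad g_k(\boldsymbol\phi,\alpha):=\boldsymbol\phi^H\boldsymbol Q_k\boldsymbol\phi+2\,\mathrm{Re}\{\boldsymbol q_k^H\boldsymbol\phi\}+d_k-\alpha\le 0\ (k=1,\dots,K),\ \ \boldsymbol\phi=\boldsymbol\psi,\ \ |\psi_n|=1,\ \ |\phi_n|\le 1\ (n=1,\dots,N),$$ where $\boldsymbol Q_k\in\mathbb C^{N\times N}$ are Hermitian positive semidefinite, $\boldsymbol q_k\in\mathbb C^N$, $d_k\in\mathbb R$. Run the PDD algorithm described in the context, and assume that for every outer index $k$ the point $(\boldsymbol\phi^{(k)},\boldsymbol\psi^{(k)},\alpha^{(k)})$ is a limit point of the inner sequence $(\boldsymbol\phi^{(k,t)},\boldsymbol\psi^{(k,t)},\alpha^{(k,t)})_{t\ge1}$. If the sequence $\boldsymbol\mu^{(k)}:=\frac{1}{\rho^{(k)}}(\boldsymbol\phi^{(k)}-\boldsymbol\psi^{(k)})+\boldsymbol\lambda^{(k)}$ is bounded, then every limit point of $\{(\boldsymbol\phi^{(k)},\boldsymbol\psi^{(k)},\alpha^{(k)})\}_k$ is a KKT point of (P8), i.e. there exist multipliers $\bar{\boldsymbol\nu}\in\mathbb R^K_{\ge0}$ (for $g_k\le0$), $\bar{\boldsymbol\varpi}\in\mathbb R^N_{\ge0}$ (for $|\phi_n|\le1$), $\bar{\boldsymbol\mu}\in\mathbb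 C^N$ (for $\boldsymbol\phi=\boldsymbol\psi$) and $\bar{\boldsymbol\xi}\in\mathbb R^N$ (for $|\psi_n|=1$) satisfying the KKT conditions of (P8) (stationarity in the Wirtinger sense with respect to $\boldsymbol\phi^*,\boldsymbol\psi^*,\alpha$, primal feasibility, dual feasibility and complementary slackness).
   Context: PDD algorithm for (P8). Fix a constant $c\in(0,1)$ and a sequence $\eta_k\downarrow 0$. Initialize $\boldsymbol\phi^{(0)},\boldsymbol\psi^{(0)},\alpha^{(0)},\boldsymbol\lambda^{(0)}\in\mathbb C^N$ and $\rho^{(0)}>0$. For outer iteration $k$ with current $(\boldsymbol\lambda^{(k)},\rho^{(k)})$, define the augmented Lagrangian $h(\boldsymbol\phi,\boldsymbol\psi,\alpha)=\alpha+\frac{1}{2\rho^{(k)}}\|\boldsymbol\phi-\boldsymbol\psi\|_2^2+\mathrm{Re}\{\boldsymbol\lambda^{(k)H}(\boldsymbol\phi-\boldsymbol\psi)\}$. The inner loop starts from the previous outer iterate and alternates, for $t=0,1,2,\dots$: (i) $(\boldsymbol\phi^{(k,t+1)},\alpha^{(k,t+1)})$ is an optimal solution of the convex problem $\min_{\boldsymbol\phi,\alpha} h(\boldsymbol\phi,\boldsymbol\psi^{(k,t)},\alpha)$ subject to $g_j(\boldsymbol\phi,\alpha)\le0$ for all $j$ and $|\phi_n|\le 1$ for all $n$; (ii) $\boldsymbol\psi^{(k,t+1)}=\exp\big(j\angle(\boldsymbol\phi^{(k,t+1)}+\rho^{(k)}\boldsymbol\lambda^{(k)})\big)$ (entrywise),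 which minimizes $h(\boldsymbol\phi^{(k,t+1)},\cdot,\alpha^{(k,t+1)})$ over $\{\boldsymbol\psi:|\psi_n|=1\ \forall n\}$. The outer iterate $(\boldsymbol\phi^{(k)},\boldsymbol\psi^{(k)},\alpha^{(k)})$ is a limit point of the inner sequence. Outer update: if $\|\boldsymbol\phi^{(k)}-\boldsymbol\psi^{(k)}\|_\infty\le\eta_k$, set $\boldsymbol\lambda^{(k+1)}=\boldsymbol\lambda^{(k)}+\frac{1}{\rho^{(k)}}(\boldsymbol\phi^{(k)}-\boldsymbol\psi^{(k)})$, $\rho^{(k+1)}=\rho^{(k)}$; otherwise set $\boldsymbol\lambda^{(k+1)}=\boldsymbol\lambda^{(k)}$, $\rho^{(k+1)}=c\,\rho^{(k)}$. *)

theory Defs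
  imports "HOL-Analysis.Analysis"
begin

text \<open>Vectors in C^N are modelled as complex^'n (index type 'n finite, N = CARD('n));
  the K constraints g_k are indexed by a finite type 'm (K = CARD('m)).\<close>

definition herm_form :: "complex^'n^'n \<Rightarrow> complex^'n \<Rightarrow> complex" where
  "herm_form Q x = (\<Sum>i\<in>UNIV. \<Sum>j\<in>UNIV. cnj (x$i) * Q$i$j * x$j)"

definition cinner :: "complex^'n \<Rightarrow> complex^'n \<Rightarrow> complex" where
  "cinner a b = (\<Sum>i\<in>UNIV. cnj (a$i) * b$i)"

definition hermitian_psd :: "complex^'n^'n \<Rightarrow> bool" where
  "hermitian_psd Q \<longleftrightarrow> (\<forall>i j. Q$i$j = cnj (Q$j$i)) \<and> (\<forall>x. 0 \<le> Re (herm_form Q x))"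

text \<open>g_k(phi,alpha) = phi^H Q_k phi + 2 Re(q_k^H phi) + d_k - alpha
  (phi^H Q phi is real for Hermitian Q; we take its real part)\<close>
definition gP8 :: "complex^'n^'n \<Rightarrow> complex^'n \<Rightarrow> real \<Rightarrow> complex^'n \<Rightarrow> real \<Rightarrow> real" where
  "gP8 Q q d phi a = Re (herm_form Q phi) + 2 * Re (cinner q phi) + d - a"

definition sub_feasible ::
  "('m \<Rightarrow> complex^'n^'n) \<Rightarrow> ('m \<Rightarrow> complex^'n) \<Rightarrow> ('m \<Rightarrow> real) \<Rightarrow> complex^'n \<Rightarrow> real \<Rightarrow> bool" where
  "sub_feasible Q q d phi a \<longleftrightarrow> (\<forall>k. gP8 (Q k) (q k) (d k) phi a \<le> 0) \<and> (\<forall>n. cmod (phi$n) \<le> 1)"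

definition aug_lag :: "complex^'n \<Rightarrow> real \<Rightarrow> complex^'n \<Rightarrow> complex^'n \<Rightarrow> real \<Rightarrow> real" where
  "aug_lag lam rho phi psi a = a + 1 / (2 * rho) * (norm (phi - psi))^2 + Re (cinner lam (phi - psi))"

definition linf :: "complex^'n \<Rightarrow> real" where
  "linf v = Max (range (\<lambda>i. cmod (v$i)))"

definition seq_limit_point :: "'a::topological_space \<Rightarrow> (nat \<Rightarrow> 'a) \<Rightarrow> bool" where
  "seq_limit_point x s \<longleftrightarrow> (\<exists>r. strict_mono r \<and> (s \<circ> r) \<longlonglongrightarrow> x)"

text \<open>KKT conditions of (P8), with Lagrangian
  L = alpha + sum_k nu_k g_k(phi,alpha) + sum_n varpi_n (|phi_n|^2 - 1)
      + Re(mu^H (phi - psi)) + sum_n xi_n (|psi_n|^2 - 1);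
  Wirtinger stationarity dL/dphi^* = 0, dL/dpsi^* = 0, dL/dalpha = 0 written out.\<close>
definition KKT_P8 ::
  "('m \<Rightarrow> complex^'n^'n) \<Rightarrow> ('m \<Rightarrow> complex^'n) \<Rightarrow> ('m \<Rightarrow> real) \<Rightarrow> complex^'n \<Rightarrow> complex^'n \<Rightarrow> real \<Rightarrow> bool" where
  "KKT_P8 Q q d phi psi a \<longleftrightarrow>
    (\<exists>(nu::'m \<Rightarrow> real) (varpi::'n \<Rightarrow> real) (mu::complex^'n) (xi::'n \<Rightarrow> real).
      \<comment> \<open>stationarity w.r.t. phi^*\<close>
      (\<forall>n. (\<Sum>k\<in>UNIV. complex_of_real (nu k) * ((Q k *v phi)$n + (q k)$n))
            + complex_of_real (varpi n) * phi$n + mu$n / 2 = 0) \<and>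
      \<comment> \<open>stationarity w.r.t. psi^*\<close>
      (\<forall>n. - mu$n / 2 + complex_of_real (xi n) * psi$n = 0) \<and>
      \<comment> \<open>stationarity w.r.t. alpha\<close>
      1 - (\<Sum>k\<in>UNIV. nu k) = 0 \<and>
      \<comment> \<open>primal feasibility\<close>
      (\<forall>k. gP8 (Q k) (q k) (d k) phi a \<le> 0) \<and> phi = psi \<and>
      (\<forall>n. cmod (psi$n) = 1) \<and> (\<forall>n. cmod (phi$n) \<le> 1) \<and>
      \<comment> \<open>dual feasibility\<close>
      (\<forall>k. 0 \<le> nu k) \<and> (\<forall>n. 0 \<le> varpi n) \<and>
      \<comment> \<open>complementary slackness\<close>
      (\<forall>k. nu k * gP8 (Q k) (q k) (d k) phi a = 0) \<and>
      (\<forall>n. varpi n * ((cmod (phi$n))^2 - 1) = 0))"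

end

theory Submission
  imports Defs
begin

definition cvx :: "('a::real_vector \<Rightarrow> real) \<Rightarrow> bool" where
  "cvx f \<longleftrightarrow> (\<forall>x y u v. u \<ge> 0 \<longrightarrow> v \<ge> 0 \<longrightarrow> u + v = 1 \<longrightarrow> f (u *\<^sub>R x + v *\<^sub>R y) \<le> u * f x + v * f y)"

lemma coef_nonneg:
  fixes a b c :: real
  assumes "\<And>r. r \<ge> 0 \<Longrightarrow> b \<le> c + a * r"
  shows "0 \<le> a"
proof (rule ccontr)
  assume "\<not> 0 \<le> a"
  hence a: "a < 0" by simp
  define r where "r = (\<bar>c - b\<bar>) / (-a) + 1"
  have r0: "r \<ge> 0" using a by (simp add: r_def divide_nonneg_pos)
  have "a * r = - \<bar>c - b\<bar> + a" using a by (simp add: r_def field_simps)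
  with assms[OF r0] a show False by linarith
qed

lemma eps_le:
  fixes X b C :: real
  assumes "\<And>e. e > 0 \<Longrightarrow> X \<le> b + e * C"
  shows "X \<le> b"
proof (rule ccontr)
  assume "\<not> X \<le> b"
  define e where "e = (X - b) / (2 * (\<bar>C\<bar> + 1))"
  have e0: "e > 0" using \<open>\<not> X \<le> b\<close> by (simp add: e_def)
  have "e * C \<le> e * \<bar>C\<bar>" using e0 by (simp add: mult_left_mono)
  also have "\<dots> < e * (\<bar>C\<bar> + 1)" using e0 by simp
  also have "\<dots> = (X - b) / 2" by (simp add: e_def field_simps)
  finally have "e * C < (X - b)/2" .
  moreover have "X \<le> b + e * C" using assms[OF e0] .
  ultimately have "X - b < (X - b) / 2" by linarith
  with \<open>\<not> X \<le> b\<close> show False by (simp add: field_simps)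
qed

lemma sum_nonpos_zero:
  fixes h :: "'i \<Rightarrow> real"
  assumes "finite S" "\<forall>i\<in>S. h i \<le> 0" "0 \<le> sum h S"
  shows "\<forall>i\<in>S. h i = 0"
proof -
  have "sum (\<lambda>i. - h i) S = 0" using assms sum_nonpos[of S h] by (simp add: sum_negf)
  hence "\<forall>i\<in>S. - h i = 0" using assms sum_nonneg_eq_0_iff[of S "\<lambda>i. - h i"] by simp
  thus ?thesis by simp
qed

lemma lagrange_convex:
  fixes f :: "'a::real_vector \<Rightarrow> real" and g :: "'k::finite \<Rightarrow> 'a \<Rightarrow> real"
  assumes cf: "cvx f" and cg: "\<And>i. cvx (g i)"
    and feas: "\<And>i. g i x0 \<le> 0"
    and opt: "\<And>x. (\<forall>i. g i x \<le> 0) \<Longrightarrow> f x0 \<le> f x"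
    and slater: "\<And>i. g i xs < 0"
  shows "\<exists>l. (\<forall>i. 0 \<le> l i) \<and> (\<forall>i. l i * g i x0 = 0) \<and> (\<forall>x. f x0 \<le> f x + (\<Sum>i\<in>UNIV. l i * g i x))"
proof -
  define A :: "(real \<times> (real^'k)) set" where "A = {(t, s). \<exists>x. f x \<le> t \<and> (\<forall>i. g i x \<le> s$i)}"
  define B :: "(real \<times> (real^'k)) set" where "B = {(t, s). t < f x0 \<and> (\<forall>i. s$i < 0)}"
  have cA: "convex A" unfolding convex_def
  proof (intro ballI allI impI)
    fix p p' :: "real \<times> (real^'k)" and u v :: real
    assume p: "p \<in> A" and p': "p' \<in> A" and u: "0 \<le> u" and v: "0 \<le> v" and uv: "u + v = 1"
    obtain t s where ps: "p = (t, s)" by fastforce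
    obtain t' s' where ps': "p' = (t', s')" by fastforce
    obtain x where x: "f x \<le> t" "\<forall>i. g i x \<le> s$i" using p ps A_def by auto
    obtain x' where x': "f x' \<le> t'" "\<forall>i. g i x' \<le> s'$i" using p' ps' A_def by auto
    have "f (u *\<^sub>R x + v *\<^sub>R x') \<le> u * f x + v * f x'" using cf u v uv by (auto simp: cvx_def)
    also have "\<dots> \<le> u * t + v * t'" using x x' u v by (simp add: add_mono mult_left_mono)
    finally have 1: "f (u *\<^sub>R x + v *\<^sub>R x') \<le> u * t + v * t'" .
    have 2: "g i (u *\<^sub>R x + v *\<^sub>R x') \<le> u * s$i + v * s'$i" for i
    proof -
      have "g i (u *\<^sub>R x + v *\<^sub>R x') \<le> u * g i x + v * g i x'" using cg u v uv by (auto simp: cvx_def)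
      also have "\<dots> \<le> u * s$i + v * s'$i" using x x' u v by (simp add: add_mono mult_left_mono)
      finally show ?thesis .
    qed
    show "u *\<^sub>R p + v *\<^sub>R p' \<in> A" unfolding A_def ps ps' using 1 2 by auto
  qed
  have cB: "convex B" unfolding convex_def
  proof (intro ballI allI impI)
    fix p p' :: "real \<times> (real^'k)" and u v :: real
    assume p: "p \<in> B" and p': "p' \<in> B" and u: "0 \<le> u" and v: "0 \<le> v" and uv: "u + v = 1"
    obtain t s where ps: "p = (t, s)" by fastforce
    obtain t' s' where ps': "p' = (t', s')" by fastforce
    have h: "t < f x0" "\<forall>i. s$i < 0" "t' < f x0" "\<forall>i. s'$i < 0" using p p' ps ps' B_def by auto
    have "u * t + v * t' < f x0"
    proof (cases "u = 0")
      case True thus ?thesis using h uv by simp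
    next
      case False
      hence "u * t < u * f x0" using u h by simp
      moreover have "v * t' \<le> v * f x0" using v h by (simp add: mult_left_mono)
      ultimately have "u * t + v * t' < (u + v) * f x0" by (simp add: distrib_right)
      thus ?thesis using uv by simp
    qed
    moreover have "u * s$i + v * s'$i < 0" for i
    proof (cases "u = 0")
      case True thus ?thesis using h uv by simp
    next
      case False
      hence "u * s$i < 0" using u h by (simp add: mult_pos_neg)
      moreover have "v * s'$i \<le> 0" using v h by (meson less_imp_le mult_nonneg_nonpos)
      ultimately show ?thesis by simp
    qed
    ultimately show "u *\<^sub>R p + v *\<^sub>R p' \<in> B" unfolding B_def ps ps' by auto
  qed
  have "(f x0, \<chi> i. g i x0) \<in> A" unfolding A_def by auto
  hence neA: "A \<noteq> {}" by blast
  have "(f x0 - 1, \<chi> i. -1) \<in> B" unfolding B_def by auto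
  hence neB: "B \<noteq> {}" by blast
  have dis: "B \<inter> A = {}"
  proof (rule ccontr)
    assume "B \<inter> A \<noteq> {}"
    then obtain t s x where "t < f x0" "\<forall>i. s$i < 0" "f x \<le> t" "\<forall>i. g i x \<le> s$i"
      unfolding A_def B_def by auto
    hence "\<forall>i. g i x \<le> 0" "f x < f x0" by (meson less_imp_le order.trans, linarith)
    with opt show False by fastforce
  qed
  obtain a b where ab: "a \<noteq> 0" "\<forall>p\<in>B. inner a p \<le> b" "\<forall>p\<in>A. inner a p \<ge> b"
    using separating_hyperplane_sets[OF cB cA neB neA dis] by blast
  obtain a0 av where a: "a = (a0, av)" by fastforce
  have innerA: "inner a (t, s) = a0 * t + (\<Sum>i\<in>UNIV. av$i * s$i)" for t s
    by (simp add: a inner_vec_def)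
  have Ax: "b \<le> a0 * f x + (\<Sum>i\<in>UNIV. av$i * g i x)" for x
  proof -
    have "(f x, \<chi> i. g i x) \<in> A" unfolding A_def by auto
    with ab(3) show ?thesis by (auto simp: innerA)
  qed
  have a0: "0 \<le> a0"
  proof (rule coef_nonneg[of "b" "(\<Sum>i\<in>UNIV. av$i * g i x0) + a0 * f x0"])
    fix r :: real assume "r \<ge> 0"
    hence "(f x0 + r, \<chi> i. g i x0) \<in> A" unfolding A_def by (auto intro!: exI[of _ x0])
    with ab(3) show "b \<le> (\<Sum>i\<in>UNIV. av$i * g i x0) + a0 * f x0 + a0 * r"
      by (auto simp: innerA algebra_simps)
  qed
  have avi: "0 \<le> av$j" for j
  proof (rule coef_nonneg[of "b" "(\<Sum>i\<in>UNIV. av$i * g i x0) + a0 * f x0"])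
    fix r :: real assume "r \<ge> 0"
    hence "(f x0, \<chi> i. g i x0 + (if i = j then r else 0)) \<in> A" unfolding A_def by (auto intro!: exI[of _ x0])
    with ab(3) have "b \<le> a0 * f x0 + (\<Sum>i\<in>UNIV. av$i * (g i x0 + (if i = j then r else 0)))"
      by (auto simp: innerA)
    also have "(\<Sum>i\<in>UNIV. av$i * (g i x0 + (if i = j then r else 0))) = (\<Sum>i\<in>UNIV. av$i * g i x0) + av$j * r"
      by (simp add: distrib_left sum.distrib if_distrib[of "(*) _"] cong: if_cong)
    finally show "b \<le> (\<Sum>i\<in>UNIV. av$i * g i x0) + a0 * f x0 + av$j * r" by simp
  qed
  have Bx: "a0 * f x0 \<le> b"
  proof (rule eps_le[of _ _ "a0 + (\<Sum>i\<in>UNIV. av$i)"])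
    fix e :: real assume "e > 0"
    hence "(f x0 - e, \<chi> i. - e) \<in> B" unfolding B_def by auto
    with ab(2) have "a0 * (f x0 - e) + (\<Sum>i\<in>UNIV. av$i * (- e)) \<le> b" by (auto simp: innerA)
    thus "a0 * f x0 \<le> b + e * (a0 + (\<Sum>i\<in>UNIV. av$i))"
      by (simp add: algebra_simps sum_distrib_left sum_negf)
  qed
  have fin: "finite (UNIV :: 'k set)" by simp
  have main: "a0 * f x0 \<le> a0 * f x + (\<Sum>i\<in>UNIV. av$i * g i x)" for x using Ax[of x] Bx by linarith
  have a0pos: "a0 > 0"
  proof (rule ccontr)
    assume "\<not> a0 > 0"
    hence "a0 = 0" using a0 by simp
    with main[of xs] have s1: "0 \<le> (\<Sum>i\<in>UNIV. av$i * g i xs)" by simp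
    have s2: "\<forall>i\<in>UNIV. av$i * g i xs \<le> 0"
      using mult_nonneg_nonpos[OF avi less_imp_le[OF slater]] by blast
    have z: "\<forall>i\<in>UNIV. av$i * g i xs = 0"
      by (rule sum_nonpos_zero[OF fin s2 s1])
    have "av$i = 0" for i
    proof -
      have "av$i * g i xs = 0" using z by blast
      moreover have "g i xs \<noteq> 0" using slater[of i] by linarith
      ultimately show ?thesis by simp
    qed
    hence "av = 0" unfolding vec_eq_iff by simp
    with \<open>a0 = 0\<close> a ab(1) show False by (simp add: zero_prod_def)
  qed
  define l where "l i = av$i / a0" for i
  have l0: "\<forall>i. 0 \<le> l i" using avi a0pos by (simp add: l_def)
  have main2: "f x0 \<le> f x + (\<Sum>i\<in>UNIV. l i * g i x)" for x
  proof -
    have "a0 * f x0 \<le> a0 * (f x + (\<Sum>i\<in>UNIV. l i * g i x))"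
      using main[of x] a0pos by (simp add: l_def distrib_left sum_distrib_left)
    thus ?thesis using a0pos by simp
  qed
  have cs: "\<forall>i. l i * g i x0 = 0"
  proof -
    have s1: "0 \<le> (\<Sum>i\<in>UNIV. l i * g i x0)" using main2[of x0] by simp
    have s2: "\<forall>i\<in>UNIV. l i * g i x0 \<le> 0"
      using mult_nonneg_nonpos[OF spec[OF l0] feas] by blast
    have "\<forall>i\<in>UNIV. l i * g i x0 = 0"
      by (rule sum_nonpos_zero[OF fin s2 s1])
    thus ?thesis by simp
  qed
  show ?thesis using l0 cs main2 by blast
qed

lemma inner_cinner: "inner (u::complex^'n) v = Re (cinner u v)"
  by (simp add: inner_vec_def cinner_def inner_complex_def Re_sum)

lemma herm_cinner: "herm_form Q x = cinner x (Q *v x)"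
  by (simp add: herm_form_def cinner_def matrix_vector_mult_def sum_distrib_left mult.assoc)

lemma Reherm_inner: "Re (herm_form Q x) = inner x (Q *v x)"
  by (simp add: herm_cinner inner_cinner)

lemma mv_scale: "Q *v (t *\<^sub>R v) = t *\<^sub>R (Q *v (v::complex^'n))"
  by (simp add: vec_eq_iff matrix_vector_mult_def scaleR_sum_right)

lemma mv_add_scale: "Q *v (x + t *\<^sub>R v) = Q *v x + t *\<^sub>R (Q *v (v::complex^'n))"
  by (simp add: matrix_vector_right_distrib mv_scale)

lemma herm_sym:
  assumes "\<forall>i j. Q$i$j = cnj (Q$j$i)"
  shows "cinner x (Q *v v) = cnj (cinner v (Q *v x))"
proof -
  have c: "\<And>i j. cnj (Q$i$j) = Q$j$i" using assms by (metis complex_cnj_cnj)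
  have "cnj (cinner v (Q *v x)) = (\<Sum>i\<in>UNIV. \<Sum>j\<in>UNIV. v$i * Q$j$i * cnj (x$j))"
    using c by (simp add: cinner_def matrix_vector_mult_def sum_distrib_left mult.assoc)
  also have "\<dots> = (\<Sum>j\<in>UNIV. \<Sum>i\<in>UNIV. v$i * Q$j$i * cnj (x$j))" by (rule sum.swap)
  also have "\<dots> = cinner x (Q *v v)"
    by (simp add: cinner_def matrix_vector_mult_def sum_distrib_left mult.commute mult.left_commute)
  finally show ?thesis by simp
qed

lemma inner_herm_sym:
  assumes "\<forall>i j. Q$i$j = cnj (Q$j$i)"
  shows "inner x (Q *v v) = inner v (Q *v x)"
  using herm_sym[OF assms, of x v] by (simp add: inner_cinner)

lemma Reherm_expand:
  assumes "\<forall>i j. Q$i$j = cnj (Q$j$i)"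
  shows "Re (herm_form Q (x + t *\<^sub>R v)) = Re (herm_form Q x) + t * (2 * inner v (Q *v x)) + t^2 * Re (herm_form Q v)"
proof -
  have s: "inner x (Q *v v) = inner v (Q *v x)" using inner_herm_sym[OF assms] .
  have "Re (herm_form Q (x + t *\<^sub>R v)) = inner (x + t *\<^sub>R v) (Q *v x + t *\<^sub>R (Q *v v))"
    by (simp only: Reherm_inner mv_add_scale)
  also have "\<dots> = inner x (Q *v x) + t * inner x (Q *v v) + t * inner v (Q *v x) + t * t * inner v (Q *v v)"
    by (simp only: inner_add_left inner_add_right inner_scaleR_left inner_scaleR_right) (simp add: algebra_simps)
  finally show ?thesis unfolding s by (simp add: Reherm_inner power2_eq_square algebra_simps)
qed

lemma gP8_expand:
  assumes "\<forall>i j. Q$i$j = cnj (Q$j$i)"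
  shows "gP8 Q q d (x + t *\<^sub>R v) (a + t * b) = gP8 Q q d x a
     + t * (2 * inner v (Q *v x) + 2 * inner q v - b) + t^2 * Re (herm_form Q v)"
  using Reherm_expand[OF assms, of x t v]
  by (simp add: gP8_def inner_cinner[symmetric] inner_add_right algebra_simps)

lemma cmod_expand:
  "(cmod ((x + t *\<^sub>R v) $ n))^2 = (cmod (x$n))^2 + t * (2 * inner (x$n) (v$n)) + t^2 * (cmod (v$n))^2"
  by (simp only: power2_norm_eq_inner vector_add_component vector_scaleR_component)
     (simp add: inner_add_left inner_add_right inner_commute power2_eq_square algebra_simps)

lemma norm_expand:
  "(norm (u + t *\<^sub>R v))^2 = (norm u)^2 + t * (2 * inner u v) + t^2 * (norm v)^2"
  for u v :: "'a::real_inner"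
  by (simp only: power2_norm_eq_inner)
     (simp add: inner_add_left inner_add_right inner_commute power2_eq_square algebra_simps)

lemma aug_lag_inner: "aug_lag lam rho phi psi a = a + 1 / (2 * rho) * (norm (phi - psi))^2 + inner lam (phi - psi)"
  by (simp add: aug_lag_def inner_cinner)

lemma aug_lag_expand:
  assumes "rho > 0"
  shows "aug_lag lam rho (x + t *\<^sub>R v) psi (a + t * b) = aug_lag lam rho x psi a
    + t * (b + inner ((1 / rho) *\<^sub>R (x - psi) + lam) v) + t^2 * ((norm v)^2 / (2 * rho))"
proof -
  have e1: "x + t *\<^sub>R v - psi = (x - psi) + t *\<^sub>R v" by simp
  have e2: "inner lam ((x - psi) + t *\<^sub>R v) = inner lam (x - psi) + t * inner lam v"
    by (simp add: inner_add_right)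
  have e3: "inner ((1 / rho) *\<^sub>R (x - psi) + lam) v = inner (x - psi) v / rho + inner lam v"
    by (simp add: inner_add_left)
  show ?thesis
    unfolding aug_lag_inner e1 norm_expand e2 e3 using assms
    by (simp add: field_simps)
qed

lemma cvx_quad:
  fixes f :: "'a::real_vector \<Rightarrow> real"
  assumes ex: "\<And>x w t. f (x + t *\<^sub>R w) = f x + t * D x w + t^2 * E w" and E: "\<And>w. 0 \<le> E w"
  shows "cvx f"
  unfolding cvx_def
proof (intro allI impI)
  fix x y :: 'a and u v :: real
  assume u: "0 \<le> u" and v: "0 \<le> v" and uv: "u + v = 1"
  have u1: "u = 1 - v" using uv by simp
  have eq: "u *\<^sub>R x + v *\<^sub>R y = x + v *\<^sub>R (y - x)" unfolding u1
    by (simp add: scaleR_diff_left scaleR_diff_right)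
  have fy: "f y = f x + D x (y - x) + E (y - x)" using ex[of x 1 "y - x"] by simp
  have v1: "v \<le> 1" using u uv by simp
  have "v * (v * E (y - x)) \<le> v * E (y - x)"
    by (rule mult_left_le_one_le) (use v v1 E[of "y - x"] in auto)
  hence vv: "v^2 * E (y - x) \<le> v * E (y - x)" by (simp add: power2_eq_square mult.assoc)
  have lhs: "f (u *\<^sub>R x + v *\<^sub>R y) = f x + v * D x (y - x) + v^2 * E (y - x)"
    unfolding eq by (rule ex)
  have rhs: "u * f x + v * f y = f x + v * D x (y - x) + v * E (y - x)"
    unfolding fy u1 by (simp add: algebra_simps)
  show "f (u *\<^sub>R x + v *\<^sub>R y) \<le> u * f x + v * f y"
    unfolding lhs rhs using vv by linarith
qed

lemma quad_nonneg:
  fixes D E :: real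
  assumes "\<And>t. 0 < t \<Longrightarrow> t \<le> 1 \<Longrightarrow> 0 \<le> t * D + t^2 * E"
  shows "0 \<le> D"
proof (rule ccontr)
  assume D: "\<not> 0 \<le> D"
  define s where "s = \<bar>E\<bar> + 1"
  have s: "s > 0" by (simp add: s_def)
  define t where "t = min 1 (- D / (2 * s))"
  have "D / (2 * s) < 0" using D s by (simp add: divide_neg_pos)
  hence "- D / (2 * s) > 0" by simp
  hence t0: "t > 0" by (simp add: t_def)
  have t1: "t \<le> 1" by (simp add: t_def)
  have ts: "t * s \<le> - D / 2" using s by (simp add: t_def min_def field_simps)
  have "t^2 * E \<le> t^2 * s" by (simp add: s_def mult_left_mono)
  also have "\<dots> = t * (t * s)" by (simp add: power2_eq_square)
  also have "\<dots> \<le> t * (- D / 2)" using mult_left_mono[OF ts] t0 by simp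
  finally have "t * D + t^2 * E \<le> t * D / 2" by linarith
  also have "\<dots> < 0" using t0 D by (simp add: mult_pos_neg)
  finally show False using assms[OF t0 t1] by simp
qed

lemma quad_zero:
  fixes D E :: real
  assumes "\<And>t. 0 \<le> t * D + t^2 * E"
  shows "D = 0"
proof -
  have "0 \<le> D" by (rule quad_nonneg) (use assms in auto)
  moreover have "0 \<le> - D" by (rule quad_nonneg[of _ E]) (use assms[of "- _"] in auto)
  ultimately show ?thesis by simp
qed

lemma all_sum_split: "(\<forall>i. P i) \<longleftrightarrow> (\<forall>j. P (Inl j)) \<and> (\<forall>n. P (Inr n))"
  by (metis obj_sumE)

lemma sum_UNIV_sum: "(\<Sum>i\<in>(UNIV::('a::finite + 'b::finite) set). f i) = (\<Sum>j\<in>UNIV. f (Inl j)) + (\<Sum>n\<in>UNIV. f (Inr n))"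
  by (simp add: UNIV_Plus_UNIV[symmetric] sum.Plus del: UNIV_Plus_UNIV) 

lemma cmod_le1_iff: "cmod z \<le> 1 \<longleftrightarrow> (cmod z)^2 - 1 \<le> 0"
  by (simp add: abs_square_le_1)

lemma kkt_from_limit:
  fixes Q :: "'m::finite \<Rightarrow> complex^'n::finite^'n"
    and q :: "'m \<Rightarrow> complex^'n" and d :: "'m \<Rightarrow> real"
    and phib psib mubar :: "complex^'n" and alphab :: real
  assumes psd: "\<And>k. hermitian_psd (Q k)"
    and feas: "sub_feasible Q q d phib alphab"
    and eq: "phib = psib"
    and unit: "\<forall>n. cmod (psib$n) = 1"
    and al: "\<forall>n. Im (cnj (psib$n) * mubar$n) = 0"
    and vi: "\<forall>phi' a'. sub_feasible Q q d phi' a' \<longrightarrow> 0 \<le> (a' - alphab) + inner mubar (phi' - phib)"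
  shows "KKT_P8 Q q d phib psib alphab"
proof -
  define G where "G i p = (case i of Inl j \<Rightarrow> gP8 (Q j) (q j) (d j) (fst p) (snd p)
      | Inr n \<Rightarrow> (cmod (fst p $ n))^2 - 1)" for i :: "'m + 'n" and p :: "(complex^'n) \<times> real"
  define DG where "DG i p w = (case i of Inl j \<Rightarrow> 2 * inner (fst w) (Q j *v fst p) + 2 * inner (q j) (fst w) - snd w
      | Inr n \<Rightarrow> 2 * inner (fst p $ n) (fst w $ n))" for i :: "'m + 'n" and p w :: "(complex^'n) \<times> real"
  define EG where "EG i w = (case i of Inl j \<Rightarrow> Re (herm_form (Q j) (fst w))
      | Inr n \<Rightarrow> (cmod (fst w $ n))^2)" for i :: "'m + 'n" and w :: "(complex^'n) \<times> real"
  define F where "F p = snd p + inner mubar (fst p)" for p :: "(complex^'n) \<times> real"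
  have herm: "\<And>j. \<forall>i k. Q j$i$k = cnj (Q j$k$i)" using psd unfolding hermitian_psd_def by blast
  have psdE: "\<And>j v. 0 \<le> Re (herm_form (Q j) v)" using psd unfolding hermitian_psd_def by blast
  have sfG: "sub_feasible Q q d phi a \<longleftrightarrow> (\<forall>i. G i (phi, a) \<le> 0)" for phi a
    unfolding all_sum_split G_def sub_feasible_def by (simp add: cmod_le1_iff)
  have exG: "G i (p + t *\<^sub>R w) = G i p + t * DG i p w + t^2 * EG i w" for i p t w
  proof (cases i)
    case (Inl j)
    have "fst (p + t *\<^sub>R w) = fst p + t *\<^sub>R fst w" "snd (p + t *\<^sub>R w) = snd p + t * snd w" by simp_all
    then show ?thesis using Inl by (simp add: G_def DG_def EG_def gP8_expand[OF herm])
  next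
    case (Inr n)
    have "fst (p + t *\<^sub>R w) = fst p + t *\<^sub>R fst w" by simp
    then show ?thesis using Inr by (simp only: G_def DG_def EG_def sum.case cmod_expand)
  qed
  have EG0: "0 \<le> EG i w" for i w by (cases i) (simp_all add: EG_def psdE)
  have cG: "cvx (G i)" for i by (rule cvx_quad[OF exG EG0])
  have exF: "F (p + t *\<^sub>R w) = F p + t * (snd w + inner mubar (fst w)) + t^2 * 0" for p t w
    by (simp add: F_def inner_add_right algebra_simps)
  have cF: "cvx F" by (rule cvx_quad[OF exF]) simp
  define x0 where "x0 = (phib, alphab)"
  define xs where "xs = ((0::complex^'n), (\<Sum>j\<in>UNIV. \<bar>d j\<bar>) + 1)"
  have feas0: "G i x0 \<le> 0" for i using feas sfG x0_def by blast
  have slater: "G i xs < 0" for i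
  proof (cases i)
    case (Inl j)
    have "\<bar>d j\<bar> \<le> (\<Sum>j\<in>UNIV. \<bar>d j\<bar>)"
      by (rule member_le_sum) auto
    hence "d j \<le> (\<Sum>j\<in>UNIV. \<bar>d j\<bar>)" by linarith
    then show ?thesis using Inl
      by (simp add: G_def xs_def gP8_def herm_form_def cinner_def)
  next
    case (Inr n) then show ?thesis by (simp add: G_def xs_def)
  qed
  have opt: "F x0 \<le> F p" if "\<forall>i. G i p \<le> 0" for p
  proof -
    obtain phi' a' where p: "p = (phi', a')" by fastforce
    have "\<forall>i. G i (phi', a') \<le> 0" using that unfolding p .
    hence "sub_feasible Q q d phi' a'" unfolding sfG .
    hence "0 \<le> (a' - alphab) + inner mubar (phi' - phib)" using vi by blast
    thus ?thesis by (simp add: F_def x0_def p inner_diff_right)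
  qed
  have ex: "\<exists>l. (\<forall>i. 0 \<le> l i) \<and> (\<forall>i. l i * G i x0 = 0) \<and> (\<forall>x. F x0 \<le> F x + (\<Sum>i\<in>UNIV. l i * G i x))"
    by (rule lagrange_convex[of F G x0 xs, OF cF cG feas0 opt slater])
  then obtain l where l0: "\<forall>i. 0 \<le> l i" and cs: "\<forall>i. l i * G i x0 = 0"
    and lmin: "\<forall>x. F x0 \<le> F x + (\<Sum>i\<in>UNIV. l i * G i x)"
    by (elim exE conjE)
  have stat: "snd w + inner mubar (fst w) + (\<Sum>i\<in>UNIV. l i * DG i x0 w) = 0" for w
  proof (rule quad_zero[where E = "\<Sum>i\<in>UNIV. l i * EG i w"])
    fix t :: real
    have "F x0 \<le> F (x0 + t *\<^sub>R w) + (\<Sum>i\<in>UNIV. l i * G i (x0 + t *\<^sub>R w))" using lmin by blast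
    also have "\<dots> = F x0 + (\<Sum>i\<in>UNIV. l i * G i x0) + t * (snd w + inner mubar (fst w) + (\<Sum>i\<in>UNIV. l i * DG i x0 w))
         + t^2 * (\<Sum>i\<in>UNIV. l i * EG i w)"
      unfolding exF exG by (simp add: algebra_simps sum.distrib sum_distrib_left)
    also have "(\<Sum>i\<in>UNIV. l i * G i x0) = 0" by (rule sum.neutral) (use cs in blast)
    finally show "0 \<le> t * (snd w + inner mubar (fst w) + (\<Sum>i\<in>UNIV. l i * DG i x0 w)) + t^2 * (\<Sum>i\<in>UNIV. l i * EG i w)"
      by simp
  qed
  define nu where "nu j = l (Inl j)" for j
  define varpi where "varpi n = l (Inr n)" for n
  have alpha_stat: "1 - (\<Sum>k\<in>UNIV. nu k) = 0"
    using stat[of "(0, 1)"] by (simp add: sum_UNIV_sum DG_def nu_def sum_negf)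
  define W where "W = (\<chi> n. (\<Sum>k\<in>UNIV. complex_of_real (nu k) * ((Q k *v phib)$n + (q k)$n))
            + complex_of_real (varpi n) * phib$n + mubar$n / 2)"
  have Dv: "inner mubar v + (\<Sum>i\<in>UNIV. l i * DG i x0 (v, 0)) = 2 * inner v W" for v
  proof -
    have dg: "(\<Sum>i\<in>UNIV. l i * DG i x0 (v, 0)) = (\<Sum>j\<in>UNIV. nu j * (2 * inner v (Q j *v phib) + 2 * inner (q j) v))
        + (\<Sum>n\<in>UNIV. varpi n * (2 * inner (phib $ n) (v $ n)))"
      unfolding sum_UNIV_sum by (simp add: DG_def nu_def varpi_def x0_def)
    have e1: "(\<Sum>j\<in>UNIV. nu j * (2 * inner v (Q j *v phib) + 2 * inner (q j) v))
        = 2 * (\<Sum>j\<in>UNIV. nu j * (inner v (Q j *v phib) + inner (q j) v))"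
      by (simp add: sum_distrib_left algebra_simps)
    have e2: "(\<Sum>n\<in>UNIV. varpi n * (2 * inner (phib $ n) (v $ n))) = 2 * (\<Sum>n\<in>UNIV. varpi n * inner (phib $ n) (v $ n))"
      by (simp add: sum_distrib_left algebra_simps)
    have Wn: "inner (v$n) (W$n) = (\<Sum>j\<in>UNIV. nu j * (inner (v$n) ((Q j *v phib)$n) + inner (v$n) ((q j)$n)))
        + varpi n * inner (v$n) (phib$n) + inner (v$n) (mubar$n) / 2" for n
    proof -
      have "W$n = (\<Sum>k\<in>UNIV. nu k *\<^sub>R ((Q k *v phib)$n + (q k)$n)) + varpi n *\<^sub>R phib$n + (1/2) *\<^sub>R mubar$n"
        by (simp add: W_def scaleR_conv_of_real)
      thus ?thesis by (simp add: inner_add_right inner_sum_right)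
    qed
    have iW: "inner v W = (\<Sum>n\<in>UNIV. \<Sum>j\<in>UNIV. nu j * (inner (v$n) ((Q j *v phib)$n) + inner (v$n) ((q j)$n)))
        + (\<Sum>n\<in>UNIV. varpi n * inner (v$n) (phib$n)) + (\<Sum>n\<in>UNIV. inner (v$n) (mubar$n)) / 2"
      unfolding inner_vec_def Wn by (simp add: sum.distrib sum_divide_distrib)
    have sw: "(\<Sum>n\<in>UNIV. \<Sum>j\<in>UNIV. nu j * (inner (v$n) ((Q j *v phib)$n) + inner (v$n) ((q j)$n)))
        = (\<Sum>j\<in>UNIV. nu j * (inner v (Q j *v phib) + inner (q j) v))"
      by (subst sum.swap) (simp add: inner_vec_def sum_distrib_left sum.distrib inner_commute distrib_left)
    have s3: "(\<Sum>n\<in>UNIV. varpi n * inner (v$n) (phib$n)) = (\<Sum>n\<in>UNIV. varpi n * inner (phib $ n) (v $ n))"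
      by (simp add: inner_commute)
    have s4: "(\<Sum>n\<in>UNIV. inner (v$n) (mubar$n)) = inner mubar v"
      by (simp add: inner_vec_def inner_commute)
    show ?thesis unfolding dg e1 e2 iW sw s3 s4 by simp
  qed
  have W0: "W = 0"
  proof -
    have "inner mubar W + (\<Sum>i\<in>UNIV. l i * DG i x0 (W, 0)) = 0" using stat[of "(W, 0)"] by simp
    hence "inner W W = 0" using Dv[of W] by simp
    thus ?thesis by simp
  qed
  have phi_stat: "\<forall>n. (\<Sum>k\<in>UNIV. complex_of_real (nu k) * ((Q k *v phib)$n + (q k)$n))
            + complex_of_real (varpi n) * phib$n + mubar$n / 2 = 0"
    using W0 by (simp add: W_def vec_eq_iff)
  define xi where "xi n = Re (cnj (psib$n) * mubar$n) / 2" for n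
  have psi_stat: "\<forall>n. - mubar$n / 2 + complex_of_real (xi n) * psib$n = 0"
  proof
    fix n
    have r: "complex_of_real (Re (cnj (psib$n) * mubar$n)) = cnj (psib$n) * mubar$n"
      using al by (simp add: complex_eq_iff)
    have u: "cnj (psib$n) * psib$n = 1"
    proof -
      have "cnj (psib$n) * psib$n = psib$n * cnj (psib$n)" by (rule mult.commute)
      also have "\<dots> = complex_of_real ((cmod (psib$n))^2)" by (rule complex_norm_square[symmetric])
      also have "\<dots> = 1" using unit by simp
      finally show ?thesis .
    qed
    have x: "complex_of_real (xi n) = cnj (psib$n) * mubar$n / 2"
      unfolding xi_def using r by simp
    have "complex_of_real (xi n) * psib$n = (cnj (psib$n) * psib$n) * mubar$n / 2"
      unfolding x by (simp add: algebra_simps)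
    also have "\<dots> = mubar$n / 2" unfolding u by simp
    finally show "- mubar$n / 2 + complex_of_real (xi n) * psib$n = 0" by simp
  qed
  show ?thesis unfolding KKT_P8_def
  proof (intro exI conjI)
    show "\<forall>n. (\<Sum>k\<in>UNIV. complex_of_real (nu k) * ((Q k *v phib)$n + (q k)$n))
            + complex_of_real (varpi n) * phib$n + mubar$n / 2 = 0" by (rule phi_stat)
    show "\<forall>n. - mubar$n / 2 + complex_of_real (xi n) * psib$n = 0" by (rule psi_stat)
    show "1 - (\<Sum>k\<in>UNIV. nu k) = 0" by (rule alpha_stat)
    show "\<forall>k. gP8 (Q k) (q k) (d k) phib alphab \<le> 0" using feas by (simp add: sub_feasible_def)
    show "phib = psib" by (rule eq)
    show "\<forall>n. cmod (psib $ n) = 1" by (rule unit)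
    show "\<forall>n. cmod (phib $ n) \<le> 1" using feas by (simp add: sub_feasible_def)
    show "\<forall>k. 0 \<le> nu k" using l0 by (simp add: nu_def)
    show "\<forall>n. 0 \<le> varpi n" using l0 by (simp add: varpi_def)
    show "\<forall>k. nu k * gP8 (Q k) (q k) (d k) phib alphab = 0" proof
      fix k show "nu k * gP8 (Q k) (q k) (d k) phib alphab = 0" using cs[rule_format, of "Inl k"] by (simp add: nu_def G_def x0_def)
    qed
    show "\<forall>n. varpi n * ((cmod (phib $ n))\<^sup>2 - 1) = 0" proof
      fix n show "varpi n * ((cmod (phib $ n))\<^sup>2 - 1) = 0" using cs[rule_format, of "Inr n"] by (simp add: varpi_def G_def x0_def)
    qed
  qed
qed

lemma tendsto_aug_lag:
  assumes "(f \<longlongrightarrow> a) F" "(g \<longlongrightarrow> b) F" "(h \<longlongrightarrow> c) F"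
  shows "((\<lambda>n. aug_lag lam rho (f n) (g n) (h n)) \<longlongrightarrow> aug_lag lam rho a b c) F"
  unfolding aug_lag_inner by (intro tendsto_intros assms)

lemma tendsto_gP8:
  assumes "(f \<longlongrightarrow> a) F" "(h \<longlongrightarrow> c) F"
  shows "((\<lambda>n. gP8 Q q d (f n) (h n)) \<longlongrightarrow> gP8 Q q d a c) F"
  unfolding gP8_def herm_form_def cinner_def by (intro tendsto_intros assms)

lemma psi_align:
  assumes "p = exp (\<i> * complex_of_real (Arg w))"
  shows "cmod p = 1" "cnj p * w = complex_of_real (cmod w)"
proof -
  show c: "cmod p = 1" using assms by (simp add: norm_exp_i_times)
  have u: "cnj p * p = 1"
  proof -
    have "cnj p * p = p * cnj p" by (rule mult.commute)
    also have "\<dots> = complex_of_real ((cmod p)^2)" by (rule complex_norm_square[symmetric])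
    also have "\<dots> = 1" using c by simp
    finally show ?thesis .
  qed
  have w: "w = complex_of_real (cmod w) * p"
  proof -
    have "w = rcis (cmod w) (Arg w)" by (simp add: rcis_cmod_Arg)
    also have "\<dots> = complex_of_real (cmod w) * p" by (simp add: rcis_def cis_conv_exp assms)
    finally show ?thesis .
  qed
  have "cnj p * w = complex_of_real (cmod w) * (cnj p * p)"
    by (subst w) (simp add: algebra_simps)
  thus "cnj p * w = complex_of_real (cmod w)" unfolding u by simp
qed

lemma normsq_vec_unit:
  assumes "\<forall>n. cmod ((z::complex^'n) $ n) = 1"
  shows "(norm z)^2 = real CARD('n)"
proof -
  have "(norm z)^2 = (\<Sum>n\<in>UNIV. inner (z$n) (z$n))" by (simp add: power2_norm_eq_inner inner_vec_def)
  also have "\<dots> = (\<Sum>n\<in>UNIV. (cmod (z$n))^2)" by (simp only: power2_norm_eq_inner)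
  also have "\<dots> = real CARD('n)" using assms by simp
  finally show ?thesis .
qed

lemma normsq_diff: "(norm (x - y))^2 = (norm x)^2 - 2 * inner x y + (norm y)^2"
  for x y :: "'a::real_inner"
  by (simp only: power2_norm_eq_inner) (simp add: inner_diff_left inner_diff_right inner_commute)

lemma torus_min:
  fixes phi psi z lam :: "complex^'n"
  assumes rho: "rho > 0"
    and psi: "\<And>n. psi $ n = exp (\<i> * complex_of_real (Arg ((phi + rho *\<^sub>R lam) $ n)))"
    and z: "\<forall>n. cmod (z $ n) = 1"
  shows "aug_lag lam rho phi psi a \<le> aug_lag lam rho phi z a"
proof -
  define w where "w = phi + rho *\<^sub>R lam"
  have pu: "\<forall>n. cmod (psi $ n) = 1" using psi_align(1)[OF psi] by blast
  have ip: "inner (w$n) (psi$n) = cmod (w$n)" for n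
  proof -
    have e: "cnj (psi$n) * w$n = complex_of_real (cmod (w$n))" unfolding w_def by (rule psi_align(2)[OF psi[of n]])
    have "cnj (w$n) * psi$n = cnj (cnj (psi$n) * w$n)" by (simp add: mult.commute)
    also have "\<dots> = complex_of_real (cmod (w$n))" unfolding e by (rule complex_cnj_complex_of_real)
    finally have "Re (cnj (w$n) * psi$n) = cmod (w$n)" by simp
    thus ?thesis by (simp add: inner_complex_def)
  qed
  have iz: "inner (w$n) (z$n) \<le> cmod (w$n)" for n
    using norm_cauchy_schwarz[of "w$n" "z$n"] z by simp
  have key: "inner w z \<le> inner w psi"
    unfolding inner_vec_def ip by (rule sum_mono) (rule iz)
  have kw: "inner w y = inner phi y + rho * inner lam y" for y
    by (simp add: w_def inner_add_left)
  have key2: "(inner phi z + rho * inner lam z) / rho \<le> (inner phi psi + rho * inner lam psi) / rho"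
    using key rho unfolding kw by (simp add: divide_right_mono)
  have key3: "inner phi z / rho + inner lam z \<le> inner phi psi / rho + inner lam psi"
    using key2 rho by (simp add: add_divide_distrib)
  have n1: "(norm psi)^2 = real CARD('n)" by (rule normsq_vec_unit[OF pu])
  have n2: "(norm z)^2 = real CARD('n)" by (rule normsq_vec_unit[OF z])
  show ?thesis
    unfolding aug_lag_inner normsq_diff n1 n2 using key3 rho
    by (simp add: inner_diff_right field_simps)
qed

lemma interp_le0:
  fixes t g0 D E :: real
  assumes "0 \<le> t" "t \<le> 1" "0 \<le> E" "g0 \<le> 0" "g0 + D + E \<le> 0"
  shows "g0 + t * D + t^2 * E \<le> 0"
proof -
  have "t * (t * E) \<le> t * E" by (rule mult_left_le_one_le) (use assms in auto)
  hence a: "t^2 * E \<le> t * E" by (simp add: power2_eq_square mult.assoc)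
  have "t * (D + E) \<le> t * (- g0)" by (rule mult_left_mono) (use assms in auto)
  hence b: "t * D + t * E \<le> - t * g0" by (simp add: algebra_simps)
  have "(1 - t) * g0 \<le> 0" by (rule mult_nonneg_nonpos) (use assms in auto)
  with a b show ?thesis by (simp add: algebra_simps)
qed

lemma sub_feasible_interp:
  fixes Q :: "'m::finite \<Rightarrow> complex^'n::finite^'n"
  assumes psd: "\<And>k. hermitian_psd (Q k)"
    and f0: "sub_feasible Q q d P A" and f1: "sub_feasible Q q d P' A'"
    and t: "0 \<le> t" "t \<le> 1"
  shows "sub_feasible Q q d (P + t *\<^sub>R (P' - P)) (A + t * (A' - A))"
proof -
  have herm: "\<And>j. \<forall>i k. Q j$i$k = cnj (Q j$k$i)" using psd unfolding hermitian_psd_def by blast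
  have psdE: "\<And>j v. 0 \<le> Re (herm_form (Q j) v)" using psd unfolding hermitian_psd_def by blast
  have g: "gP8 (Q j) (q j) (d j) (P + t *\<^sub>R (P' - P)) (A + t * (A' - A)) \<le> 0" for j
  proof -
    have e1: "gP8 (Q j) (q j) (d j) (P + 1 *\<^sub>R (P' - P)) (A + 1 * (A' - A)) = gP8 (Q j) (q j) (d j) P A
     + 1 * (2 * inner (P' - P) (Q j *v P) + 2 * inner (q j) (P' - P) - (A' - A)) + 1^2 * Re (herm_form (Q j) (P' - P))"
      by (rule gP8_expand[OF herm])
    have "gP8 (Q j) (q j) (d j) P' A' \<le> 0" using f1 by (simp add: sub_feasible_def)
    hence e2: "gP8 (Q j) (q j) (d j) P A + (2 * inner (P' - P) (Q j *v P) + 2 * inner (q j) (P' - P) - (A' - A))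
         + Re (herm_form (Q j) (P' - P)) \<le> 0" using e1 by simp
    have "gP8 (Q j) (q j) (d j) P A \<le> 0" using f0 by (simp add: sub_feasible_def)
    from interp_le0[OF t psdE this e2] show ?thesis by (simp only: gP8_expand[OF herm])
  qed
  have c: "cmod ((P + t *\<^sub>R (P' - P)) $ n) \<le> 1" for n
  proof -
    have e1: "(cmod ((P + 1 *\<^sub>R (P' - P)) $ n))^2 = (cmod (P$n))^2 + 1 * (2 * inner (P$n) ((P' - P)$n)) + 1^2 * (cmod ((P' - P)$n))^2"
      by (rule cmod_expand)
    have "cmod (P'$n) \<le> 1" using f1 by (simp add: sub_feasible_def)
    hence "(cmod (P'$n))^2 - 1 \<le> 0" by (simp add: abs_square_le_1)
    hence e2: "((cmod (P$n))^2 - 1) + (2 * inner (P$n) ((P' - P)$n)) + (cmod ((P' - P)$n))^2 \<le> 0"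
      using e1 by simp
    have "cmod (P$n) \<le> 1" using f0 by (simp add: sub_feasible_def)
    hence "(cmod (P$n))^2 - 1 \<le> 0" by (simp add: abs_square_le_1)
    from interp_le0[OF t _ this e2] have x: "((cmod (P$n))^2 - 1) + t * (2 * inner (P$n) ((P' - P)$n)) + t^2 * (cmod ((P' - P)$n))^2 \<le> 0"
      by simp
    have "(cmod ((P + t *\<^sub>R (P' - P)) $ n))^2 = (cmod (P$n))^2 + t * (2 * inner (P$n) ((P' - P)$n)) + t^2 * (cmod ((P' - P)$n))^2"
      by (rule cmod_expand)
    with x have "(cmod ((P + t *\<^sub>R (P' - P)) $ n))^2 - 1 \<le> 0" by linarith
    thus ?thesis by (simp add: abs_square_le_1)
  qed
  show ?thesis using g c by (simp add: sub_feasible_def)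
qed

lemma vi_from_min:
  fixes Q :: "'m::finite \<Rightarrow> complex^'n::finite^'n"
  assumes psd: "\<And>k. hermitian_psd (Q k)" and rho: "rho > 0"
    and f0: "sub_feasible Q q d P A"
    and mn: "\<forall>phi' a'. sub_feasible Q q d phi' a' \<longrightarrow> aug_lag lam rho P S A \<le> aug_lag lam rho phi' S a'"
  shows "\<forall>phi' a'. sub_feasible Q q d phi' a' \<longrightarrow> 0 \<le> (a' - A) + inner ((1 / rho) *\<^sub>R (P - S) + lam) (phi' - P)"
proof (intro allI impI)
  fix phi' a' assume f1: "sub_feasible Q q d phi' a'"
  show "0 \<le> (a' - A) + inner ((1 / rho) *\<^sub>R (P - S) + lam) (phi' - P)"
  proof (rule quad_nonneg[where E = "(norm (phi' - P))^2 / (2 * rho)"])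
    fix t :: real assume t: "0 < t" "t \<le> 1"
    have "sub_feasible Q q d (P + t *\<^sub>R (phi' - P)) (A + t * (a' - A))"
      by (rule sub_feasible_interp[OF psd f0 f1]) (use t in auto)
    with mn have "aug_lag lam rho P S A \<le> aug_lag lam rho (P + t *\<^sub>R (phi' - P)) S (A + t * (a' - A))" by blast
    thus "0 \<le> t * ((a' - A) + inner ((1 / rho) *\<^sub>R (P - S) + lam) (phi' - P)) + t^2 * ((norm (phi' - P))^2 / (2 * rho))"
      unfolding aug_lag_expand[OF rho] by simp
  qed
qed

lemma align_mu:
  fixes s p l :: complex
  assumes rho: "rho > 0" and u: "cmod s = 1" and a: "Im (cnj s * (p + rho *\<^sub>R l)) = 0"
  shows "Im (cnj s * ((1 / rho) *\<^sub>R (p - s) + l)) = 0"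
proof -
  have e: "(1 / rho) *\<^sub>R (p - s) + l = (1 / rho) *\<^sub>R ((p + rho *\<^sub>R l) - s)"
    using rho by (simp add: algebra_simps)
  have "Im (cnj s * ((1 / rho) *\<^sub>R (p - s) + l)) = Im ((1 / rho) *\<^sub>R (cnj s * (p + rho *\<^sub>R l) - cnj s * s))"
    by (simp only: e mult_scaleR_right right_diff_distrib)
  also have "\<dots> = (1 / rho) * (Im (cnj s * (p + rho *\<^sub>R l)) - Im (cnj s * s))" by simp
  also have "\<dots> = 0" using a by simp
  finally show ?thesis .
qed

lemma inner_limit:
  fixes Q :: "'m::finite \<Rightarrow> complex^'n::finite^'n" and ph ps :: "nat \<Rightarrow> complex^'n" and al :: "nat \<Rightarrow> real"
  assumes rho: "rho > 0"
    and si: "\<And>t. sub_feasible Q q d (ph (Suc t)) (al (Suc t)) \<and>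
        (\<forall>phi' a'. sub_feasible Q q d phi' a' \<longrightarrow>
           aug_lag lam rho (ph (Suc t)) (ps t) (al (Suc t)) \<le> aug_lag lam rho phi' (ps t) a')"
    and sii: "\<And>t n. ps (Suc t) $ n = exp (\<i> * complex_of_real (Arg ((ph (Suc t) + rho *\<^sub>R lam) $ n)))"
    and lp: "seq_limit_point (P, S, A) (\<lambda>t. (ph (Suc t), ps (Suc t), al (Suc t)))"
  shows "sub_feasible Q q d P A \<and> (\<forall>n. cmod (S$n) = 1) \<and>
    (\<forall>n. Im (cnj (S$n) * ((1 / rho) *\<^sub>R (P - S) + lam)$n) = 0) \<and>
    (\<forall>phi' a'. sub_feasible Q q d phi' a' \<longrightarrow> aug_lag lam rho P S A \<le> aug_lag lam rho phi' S a')"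
proof -
  obtain r where r: "strict_mono r"
    and lim: "((\<lambda>t. (ph (Suc t), ps (Suc t), al (Suc t))) \<circ> r) \<longlonglongrightarrow> (P, S, A)"
    using lp unfolding seq_limit_point_def by blast
  have lP: "(\<lambda>j. ph (Suc (r j))) \<longlonglongrightarrow> P" using tendsto_fst[OF lim] by (simp add: o_def)
  have lS: "(\<lambda>j. ps (Suc (r j))) \<longlonglongrightarrow> S" using tendsto_fst[OF tendsto_snd[OF lim]] by (simp add: o_def)
  have lA: "(\<lambda>j. al (Suc (r j))) \<longlonglongrightarrow> A" using tendsto_snd[OF tendsto_snd[OF lim]] by (simp add: o_def)
  have unit: "\<forall>n. cmod (ps (Suc t) $ n) = 1" for t using psi_align(1)[OF sii] by blast
  have feas: "sub_feasible Q q d P A" unfolding sub_feasible_def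
  proof (intro conjI allI)
    fix k
    have "(\<lambda>j. gP8 (Q k) (q k) (d k) (ph (Suc (r j))) (al (Suc (r j)))) \<longlonglongrightarrow> gP8 (Q k) (q k) (d k) P A"
      by (rule tendsto_gP8[OF lP lA])
    moreover have "\<exists>N. \<forall>j\<ge>N. gP8 (Q k) (q k) (d k) (ph (Suc (r j))) (al (Suc (r j))) \<le> 0"
      using si by (simp add: sub_feasible_def)
    ultimately show "gP8 (Q k) (q k) (d k) P A \<le> 0" by (rule LIMSEQ_le_const2)
  next
    fix n
    have "(\<lambda>j. cmod (ph (Suc (r j)) $ n)) \<longlonglongrightarrow> cmod (P $ n)" by (intro tendsto_intros lP)
    moreover have "\<exists>N. \<forall>j\<ge>N. cmod (ph (Suc (r j)) $ n) \<le> 1"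
      using si by (simp add: sub_feasible_def)
    ultimately show "cmod (P $ n) \<le> 1" by (rule LIMSEQ_le_const2)
  qed
  have uS: "\<forall>n. cmod (S$n) = 1"
  proof
    fix n
    have "(\<lambda>j. cmod (ps (Suc (r j)) $ n)) \<longlonglongrightarrow> cmod (S $ n)" by (intro tendsto_intros lS)
    hence "(\<lambda>j. 1) \<longlonglongrightarrow> cmod (S $ n)" using unit by simp
    thus "cmod (S$n) = 1" by (simp add: LIMSEQ_const_iff)
  qed
  have al0: "Im (cnj (ps (Suc t) $ n) * (ph (Suc t) + rho *\<^sub>R lam) $ n) = 0" for t n
    using psi_align(2)[OF sii[of t n]] by simp
  have alS: "\<forall>n. Im (cnj (S$n) * ((1 / rho) *\<^sub>R (P - S) + lam)$n) = 0"
  proof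
    fix n
    have "(\<lambda>j. Im (cnj (ps (Suc (r j)) $ n) * (ph (Suc (r j)) + rho *\<^sub>R lam) $ n))
        \<longlonglongrightarrow> Im (cnj (S $ n) * (P + rho *\<^sub>R lam) $ n)" by (intro tendsto_intros lS lP)
    hence "(\<lambda>j. 0) \<longlonglongrightarrow> Im (cnj (S $ n) * (P + rho *\<^sub>R lam) $ n)" using al0 by simp
    hence "Im (cnj (S $ n) * (P$n + rho *\<^sub>R lam$n)) = 0" by (simp add: LIMSEQ_const_iff)
    from align_mu[OF rho _ this] uS
    show "Im (cnj (S$n) * ((1 / rho) *\<^sub>R (P - S) + lam)$n) = 0" by simp
  qed
  define H where "H t = aug_lag lam rho (ph (Suc t)) (ps (Suc t)) (al (Suc t))" for t
  have tm: "aug_lag lam rho (ph (Suc (Suc t))) (ps (Suc (Suc t))) a \<le> aug_lag lam rho (ph (Suc (Suc t))) (ps (Suc t)) a" for t a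
    by (rule torus_min[OF rho sii[of "Suc t"] unit[of t]])
  have Hdec: "H (Suc t) \<le> H t" for t
  proof -
    have "H (Suc t) \<le> aug_lag lam rho (ph (Suc (Suc t))) (ps (Suc t)) (al (Suc (Suc t)))"
      unfolding H_def by (rule tm)
    also have "\<dots> \<le> H t" unfolding H_def using si[of "Suc t"] si[of t] by blast
    finally show ?thesis .
  qed
  have decH: "decseq H" using Hdec by (simp add: decseq_Suc_iff)
  have lH: "(H \<circ> r) \<longlonglongrightarrow> aug_lag lam rho P S A"
    unfolding H_def o_def by (rule tendsto_aug_lag[OF lP lS lA])
  have decHr: "decseq (H \<circ> r)"
    using decH r unfolding decseq_def o_def by (simp add: strict_mono_less_eq)
  have Hge: "aug_lag lam rho P S A \<le> H t" for t
  proof -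
    have "aug_lag lam rho P S A \<le> (H \<circ> r) t" by (rule decseq_ge[OF decHr lH])
    also have "\<dots> \<le> H t" using decH seq_suble[OF r, of t] unfolding decseq_def o_def by blast
    finally show ?thesis .
  qed
  have mn: "\<forall>phi' a'. sub_feasible Q q d phi' a' \<longrightarrow> aug_lag lam rho P S A \<le> aug_lag lam rho phi' S a'"
  proof (intro allI impI)
    fix phi' a' assume f: "sub_feasible Q q d phi' a'"
    have "(\<lambda>j. aug_lag lam rho phi' (ps (Suc (r j))) a') \<longlonglongrightarrow> aug_lag lam rho phi' S a'"
      by (rule tendsto_aug_lag[OF tendsto_const lS tendsto_const])
    moreover have "aug_lag lam rho P S A \<le> aug_lag lam rho phi' (ps (Suc (r j))) a'" for j
    proof -
      have "aug_lag lam rho P S A \<le> H (Suc (r j))" by (rule Hge)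
      also have "\<dots> \<le> aug_lag lam rho (ph (Suc (Suc (r j)))) (ps (Suc (r j))) (al (Suc (Suc (r j))))"
        unfolding H_def by (rule tm)
      also have "\<dots> \<le> aug_lag lam rho phi' (ps (Suc (r j))) a'" using si[of "Suc (r j)"] f by blast
      finally show ?thesis .
    qed
    hence "\<exists>N. \<forall>j\<ge>N. aug_lag lam rho P S A \<le> aug_lag lam rho phi' (ps (Suc (r j))) a'" by blast
    ultimately show "aug_lag lam rho P S A \<le> aug_lag lam rho phi' S a'" by (rule LIMSEQ_le_const)
  qed
  show ?thesis using feas uS alS mn by blast
qed

theorem theorem1:
  fixes Q :: "'m::finite \<Rightarrow> complex^'n::finite^'n"
    and q :: "'m \<Rightarrow> complex^'n" and d :: "'m \<Rightarrow> real"
    and c :: real and eta :: "nat \<Rightarrow> real"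
    and phi psi :: "nat \<Rightarrow> nat \<Rightarrow> complex^'n" and alpha :: "nat \<Rightarrow> nat \<Rightarrow> real"
    and phiO psiO :: "nat \<Rightarrow> complex^'n" and alphaO :: "nat \<Rightarrow> real"
    and lam :: "nat \<Rightarrow> complex^'n" and rho :: "nat \<Rightarrow> real"
    and phib psib :: "complex^'n" and alphab :: real
  assumes psd: "\<And>k. hermitian_psd (Q k)"
    and c: "0 < c" "c < 1"
    and eta: "decseq eta" "eta \<longlonglongrightarrow> 0"
    and rho0: "rho 0 > 0"
    and inner_start: "\<And>k. k \<ge> 1 \<Longrightarrow>
        phi k 0 = phiO (k - 1) \<and> psi k 0 = psiO (k - 1) \<and> alpha k 0 = alphaO (k - 1)"
    and step_i: "\<And>k t. sub_feasible Q q d (phi k (Suc t)) (alpha k (Suc t)) \<and>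
        (\<forall>phi' a'. sub_feasible Q q d phi' a' \<longrightarrow>
           aug_lag (lam k) (rho k) (phi k (Suc t)) (psi k t) (alpha k (Suc t))
             \<le> aug_lag (lam k) (rho k) phi' (psi k t) a')"
    and step_ii: "\<And>k t n. psi k (Suc t) $ n =
        exp (\<i> * complex_of_real (Arg ((phi k (Suc t) + rho k *\<^sub>R lam k) $ n)))"
    and outer_iter: "\<And>k. seq_limit_point (phiO k, psiO k, alphaO k)
        (\<lambda>t. (phi k (Suc t), psi k (Suc t), alpha k (Suc t)))"
    and outer_update: "\<And>k.
        (linf (phiO k - psiO k) \<le> eta k \<longrightarrow>
           lam (Suc k) = lam k + (1 / rho k) *\<^sub>R (phiO k - psiO k) \<and> rho (Suc k) = rho k) \<and>
        (\<not> linf (phiO k - psiO k) \<le> eta k \<longrightarrow>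
           lam (Suc k) = lam k \<and> rho (Suc k) = c * rho k)"
    and mu_bounded: "bounded (range (\<lambda>k. (1 / rho k) *\<^sub>R (phiO k - psiO k) + lam k))"
    and limpt: "seq_limit_point (phib, psib, alphab) (\<lambda>k. (phiO k, psiO k, alphaO k))"
  shows "KKT_P8 Q q d phib psib alphab"
proof -
  define mu where "mu k = (1 / rho k) *\<^sub>R (phiO k - psiO k) + lam k" for k
  have upd: "(lam (Suc k) = lam k + (1 / rho k) *\<^sub>R (phiO k - psiO k) \<and> rho (Suc k) = rho k) \<or>
      (\<not> linf (phiO k - psiO k) \<le> eta k \<and> lam (Suc k) = lam k \<and> rho (Suc k) = c * rho k)" for k
    using outer_update[of k] by blast
  have rpos: "rho k > 0" for k
  proof (induction k)
    case 0 show ?case using rho0 .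
  next
    case (Suc k) thus ?case using upd[of k] c by auto
  qed
  have rdec: "rho (Suc k) \<le> rho k" for k
  proof -
    have "c * rho k \<le> 1 * rho k" by (rule mult_right_mono) (use c rpos[of k] in auto)
    thus ?thesis using upd[of k] by auto
  qed
  have IL: "sub_feasible Q q d (phiO k) (alphaO k) \<and> (\<forall>n. cmod (psiO k $ n) = 1) \<and>
    (\<forall>n. Im (cnj (psiO k $ n) * (mu k) $ n) = 0) \<and>
    (\<forall>phi' a'. sub_feasible Q q d phi' a' \<longrightarrow> aug_lag (lam k) (rho k) (phiO k) (psiO k) (alphaO k)
        \<le> aug_lag (lam k) (rho k) phi' (psiO k) a')" for k
    unfolding mu_def by (rule inner_limit[OF rpos[of k] step_i[of k] step_ii[of k] outer_iter[of k]])
  have VI: "\<forall>phi' a'. sub_feasible Q q d phi' a' \<longrightarrow> 0 \<le> (a' - alphaO k) + inner (mu k) (phi' - phiO k)" for k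
    unfolding mu_def by (rule vi_from_min[OF psd rpos[of k]]) (use IL[of k] in auto)
  obtain M where M: "\<forall>k. norm (mu k) \<le> M" using mu_bounded unfolding mu_def bounded_iff by auto
  have lamb: "norm (lam k) \<le> max (norm (lam 0)) M" for k
  proof (induction k)
    case 0 show ?case by simp
  next
    case (Suc k)
    from upd[of k] show ?case
    proof
      assume "lam (Suc k) = lam k + (1 / rho k) *\<^sub>R (phiO k - psiO k) \<and> rho (Suc k) = rho k"
      hence "lam (Suc k) = mu k" by (simp add: mu_def algebra_simps)
      thus ?case using M by (simp add: le_max_iff_disj)
    next
      assume "\<not> linf (phiO k - psiO k) \<le> eta k \<and> lam (Suc k) = lam k \<and> rho (Suc k) = c * rho k"
      thus ?case using Suc.IH by simp
    qed
  qed
  define B where "B = M + max (norm (lam 0)) M"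
  have diffeq: "phiO k - psiO k = rho k *\<^sub>R (mu k - lam k)" for k
    using rpos[of k] by (simp add: mu_def)
  have diffb: "norm (phiO k - psiO k) \<le> rho k * B" for k
  proof -
    have "norm (mu k - lam k) \<le> norm (mu k) + norm (lam k)" by (rule norm_triangle_ineq4)
    also have "\<dots> \<le> B" unfolding B_def using M lamb[of k] by (simp add: add_mono)
    finally have "norm (mu k - lam k) \<le> B" .
    thus ?thesis using rpos[of k] unfolding diffeq by (simp add: mult_left_mono)
  qed
  have diff0: "(\<lambda>k. phiO k - psiO k) \<longlonglongrightarrow> 0"
  proof -
    have decr: "decseq rho" using rdec by (simp add: decseq_Suc_iff)
    have "\<forall>i. 0 \<le> rho i" using rpos less_imp_le by blast
    then obtain L where L: "rho \<longlonglongrightarrow> L" "\<forall>i. L \<le> rho i" by (rule decseq_convergent[OF decr])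
    have L0: "0 \<le> L" by (rule LIMSEQ_le_const[OF L(1)]) (use rpos less_imp_le in blast)
    show ?thesis
    proof (cases "L = 0")
      case True
      have "(\<lambda>k. rho k * B) \<longlonglongrightarrow> 0" using L(1) True by (intro tendsto_mult_left_zero) simp
      moreover have "eventually (\<lambda>k. norm (phiO k - psiO k) \<le> rho k * B) sequentially"
        by (intro always_eventually allI diffb)
      ultimately show ?thesis by (rule Lim_null_comparison[rotated])
    next
      case False
      hence Lpos: "L > 0" using L0 by simp
      have "L < L / c" using Lpos c by (simp add: less_divide_eq)
      hence "eventually (\<lambda>k. rho k < L / c) sequentially" using L(1) by (rule order_tendstoD(2)[rotated])
      then obtain K where K: "\<forall>k\<ge>K. rho k < L / c" by (auto simp: eventually_sequentially)
      have good: "linf (phiO k - psiO k) \<le> eta k" if "k \<ge> K" for k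
      proof (rule ccontr)
        assume "\<not> linf (phiO k - psiO k) \<le> eta k"
        hence "rho (Suc k) = c * rho k" using outer_update[of k] by blast
        also have "\<dots> < c * (L / c)" by (rule mult_strict_left_mono) (use K that c in auto)
        also have "\<dots> = L" using c by simp
        finally show False using L(2) by (metis not_less)
      qed
      have comp: "norm (phiO k - psiO k) \<le> real CARD('n) * eta k" if "k \<ge> K" for k
      proof -
        have "norm (phiO k - psiO k) \<le> (\<Sum>n\<in>UNIV. cmod ((phiO k - psiO k) $ n))"
          unfolding norm_vec_def by (rule L2_set_le_sum) simp
        also have "\<dots> \<le> (\<Sum>n\<in>(UNIV::'n set). eta k)"
        proof (rule sum_mono)
          fix n
          have "cmod ((phiO k - psiO k) $ n) \<le> linf (phiO k - psiO k)" unfolding linf_def by (rule Max_ge) auto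
          thus "cmod ((phiO k - psiO k) $ n) \<le> eta k" using good[OF that] by linarith
        qed
        also have "\<dots> = real CARD('n) * eta k" by simp
        finally show ?thesis .
      qed
      have "(\<lambda>k. real CARD('n) * eta k) \<longlonglongrightarrow> 0" using eta(2) by (intro tendsto_mult_right_zero)
      moreover have "eventually (\<lambda>k. norm (phiO k - psiO k) \<le> real CARD('n) * eta k) sequentially"
        unfolding eventually_sequentially using comp by blast
      ultimately show ?thesis by (rule Lim_null_comparison[rotated])
    qed
  qed
  obtain R where R: "strict_mono R" and limR: "((\<lambda>k. (phiO k, psiO k, alphaO k)) \<circ> R) \<longlonglongrightarrow> (phib, psib, alphab)"
    using limpt unfolding seq_limit_point_def by blast
  have "bounded (range (\<lambda>j. mu (R j)))"
    using mu_bounded unfolding mu_def by (rule bounded_subset) auto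
  then obtain mubar Sq where Sq: "strict_mono Sq" and limmu: "((\<lambda>j. mu (R j)) \<circ> Sq) \<longlonglongrightarrow> mubar"
    using bounded_imp_convergent_subsequence by blast
  define T where "T = R \<circ> Sq"
  have T: "strict_mono T" unfolding T_def using R Sq by (rule strict_mono_o)
  have limR': "(\<lambda>j. (phiO (T j), psiO (T j), alphaO (T j))) \<longlonglongrightarrow> (phib, psib, alphab)"
    using LIMSEQ_subseq_LIMSEQ[OF limR Sq] by (simp add: T_def o_def)
  have lP: "(\<lambda>j. phiO (T j)) \<longlonglongrightarrow> phib" using tendsto_fst[OF limR'] by simp
  have lS: "(\<lambda>j. psiO (T j)) \<longlonglongrightarrow> psib" using tendsto_fst[OF tendsto_snd[OF limR']] by simp
  have lA: "(\<lambda>j. alphaO (T j)) \<longlonglongrightarrow> alphab" using tendsto_snd[OF tendsto_snd[OF limR']] by simp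
  have lM: "(\<lambda>j. mu (T j)) \<longlonglongrightarrow> mubar" using limmu by (simp add: T_def o_def)
  have eqb: "phib = psib"
  proof -
    have "(\<lambda>j. phiO (T j) - psiO (T j)) \<longlonglongrightarrow> phib - psib" by (intro tendsto_intros lP lS)
    moreover have "(\<lambda>j. phiO (T j) - psiO (T j)) \<longlonglongrightarrow> 0" using LIMSEQ_subseq_LIMSEQ[OF diff0 T] by (simp add: o_def)
    ultimately have "phib - psib = 0" by (rule LIMSEQ_unique)
    thus ?thesis by simp
  qed
  have feas: "sub_feasible Q q d phib alphab" unfolding sub_feasible_def
  proof (intro conjI allI)
    fix k
    have "(\<lambda>j. gP8 (Q k) (q k) (d k) (phiO (T j)) (alphaO (T j))) \<longlonglongrightarrow> gP8 (Q k) (q k) (d k) phib alphab"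
      by (rule tendsto_gP8[OF lP lA])
    moreover have "\<exists>N. \<forall>j\<ge>N. gP8 (Q k) (q k) (d k) (phiO (T j)) (alphaO (T j)) \<le> 0"
      using IL by (simp add: sub_feasible_def)
    ultimately show "gP8 (Q k) (q k) (d k) phib alphab \<le> 0" by (rule LIMSEQ_le_const2)
  next
    fix n
    have "(\<lambda>j. cmod (phiO (T j) $ n)) \<longlonglongrightarrow> cmod (phib $ n)" by (intro tendsto_intros lP)
    moreover have "\<exists>N. \<forall>j\<ge>N. cmod (phiO (T j) $ n) \<le> 1"
      using IL by (simp add: sub_feasible_def)
    ultimately show "cmod (phib $ n) \<le> 1" by (rule LIMSEQ_le_const2)
  qed
  have uS: "\<forall>n. cmod (psib $ n) = 1"
  proof
    fix n
    have "(\<lambda>j. cmod (psiO (T j) $ n)) \<longlonglongrightarrow> cmod (psib $ n)" by (intro tendsto_intros lS)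
    hence "(\<lambda>j. 1) \<longlonglongrightarrow> cmod (psib $ n)" using IL by simp
    thus "cmod (psib $ n) = 1" by (simp add: LIMSEQ_const_iff)
  qed
  have alS: "\<forall>n. Im (cnj (psib $ n) * mubar $ n) = 0"
  proof
    fix n
    have "(\<lambda>j. Im (cnj (psiO (T j) $ n) * mu (T j) $ n)) \<longlonglongrightarrow> Im (cnj (psib $ n) * mubar $ n)"
      by (intro tendsto_intros lS lM)
    hence "(\<lambda>j. 0) \<longlonglongrightarrow> Im (cnj (psib $ n) * mubar $ n)" using IL by simp
    thus "Im (cnj (psib $ n) * mubar $ n) = 0" by (simp add: LIMSEQ_const_iff)
  qed
  have vi: "\<forall>phi' a'. sub_feasible Q q d phi' a' \<longrightarrow> 0 \<le> (a' - alphab) + inner mubar (phi' - phib)"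
  proof (intro allI impI)
    fix phi' a' assume f: "sub_feasible Q q d phi' a'"
    have "(\<lambda>j. (a' - alphaO (T j)) + inner (mu (T j)) (phi' - phiO (T j))) \<longlonglongrightarrow> (a' - alphab) + inner mubar (phi' - phib)"
      by (intro tendsto_intros lA lM lP)
    moreover have "\<exists>N. \<forall>j\<ge>N. 0 \<le> (a' - alphaO (T j)) + inner (mu (T j)) (phi' - phiO (T j))"
      using VI f by blast
    ultimately show "0 \<le> (a' - alphab) + inner mubar (phi' - phib)" by (rule LIMSEQ_le_const)
  qed
  show ?thesis by (rule kkt_from_limit[OF psd feas eqb uS alS vi])
qed

end
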